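(* For every data instance $(A,u)\in\mathbb{R}^{n\times m}\times\mathbb{R}^m$, $\tau(A,u)\ge\bar\rho(A,u)$.
   Context: $\tau(A,u):=|z^*|$ with $z^*:=\max_{x\in\mathbb{R}^n}\min_{i}(u_i-a_i^\top x)$, where $a_i$ are the columns of $A$ (assumed of unit Euclidean norm, with $\{A\lambda:\lambda\ge0\}=\mathbb{R}^n$, so the max is attained). For data $d=(A,u)$ let $\mathcal{P}_d=\{x:A^\top x\le u\}$, $\mathcal{F}=\{d:\mathcal{P}_d\ne\emptyset\}$, $\mathcal{I}=\{d:\mathcal{P}_d=\emptyset\}$, with norm $\|(A,u)\|:=\max\{\|A\|_{1,2},\|u\|_\infty\}$, where $\|A\|_{1,2}=\max_{\|w\|_1=1}\|Aw\|_2$. Renegar's distance to ill-posedness: $\bar\rho(d):=\inf_{d+\Delta d\in\mathcal{I}}\|\Delta d\|$ if $d\in\mathcal{F}$, and $\bar\rho(d):=\inf_{d+\Delta d\in\mathcal{F}}\|\Delta d\|$ if $d\in\mathcal{I}$. *)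

theory Defs
  imports "HOL-Analysis.Analysis"
begin

text \<open>Data d = (A,u) with A an n x m real matrix (columns a_i, i ranging over 'm)
  and u in R^m. The polyhedron P_d = {x. A^T x <= u}.\<close>

definition feasible :: "real^'m^'n \<Rightarrow> real^'m \<Rightarrow> bool" where
  "feasible A u \<longleftrightarrow> (\<exists>x::real^'n. \<forall>i. (transpose A *v x) $ i \<le> u $ i)"

definition norm12 :: "real^'m^'n \<Rightarrow> real" where
  "norm12 A = Sup {norm (A *v w) | w. (\<Sum>i\<in>UNIV. \<bar>w $ i\<bar>) = 1}"

definition norm_inf :: "real^'m \<Rightarrow> real" where
  "norm_inf u = Max (range (\<lambda>i. \<bar>u $ i\<bar>))"

definition data_norm :: "real^'m^'n \<Rightarrow> real^'m \<Rightarrow> real" where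
  "data_norm A u = max (norm12 A) (norm_inf u)"

definition rho_bar :: "real^'m^'n \<Rightarrow> real^'m \<Rightarrow> real" where
  "rho_bar A u =
     (if feasible A u
      then Inf {data_norm dA du | dA du. \<not> feasible (A + dA) (u + du)}
      else Inf {data_norm dA du | dA du. feasible (A + dA) (u + du)})"

definition z_star :: "real^'m^'n \<Rightarrow> real^'m \<Rightarrow> real" where
  "z_star A u = Sup (range (\<lambda>x::real^'n. Min (range (\<lambda>i. u $ i - (transpose A *v x) $ i))))"

definition tau :: "real^'m^'n \<Rightarrow> real^'m \<Rightarrow> real" where
  "tau A u = \<bar>z_star A u\<bar>"

end

theory Submission
  imports Defs
begin

lemma dn_const:
  "data_norm (0::real^'m^'n) ((\<chi> i. c)::real^'m) = \<bar>c\<bar>"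
proof -
  obtain k :: 'm where True by simp
  have w: "(\<Sum>i\<in>UNIV. \<bar>(axis k (1::real)) $ i\<bar>) = 1"
    by (simp add: axis_def if_distrib sum.delta cong: if_cong)
  have "{norm ((0::real^'m^'n) *v w) | w. (\<Sum>i\<in>UNIV. \<bar>w $ i\<bar>) = 1} = {0}"
    using w by auto
  hence n12: "norm12 (0::real^'m^'n) = 0" unfolding norm12_def by simp
  have "range (\<lambda>i::'m. \<bar>((\<chi> i. c)::real^'m) $ i\<bar>) = {\<bar>c\<bar>}" by auto
  hence "norm_inf ((\<chi> i. c)::real^'m) = \<bar>c\<bar>" unfolding norm_inf_def by simp
  thus ?thesis using n12 unfolding data_norm_def by simp
qed

lemma dn_nonneg: "data_norm (A::real^'m^'n) (u::real^'m) \<ge> 0"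
proof -
  obtain k :: 'm where True by simp
  have "\<bar>u $ k\<bar> \<le> norm_inf u" unfolding norm_inf_def by (rule Max_ge) auto
  hence "0 \<le> norm_inf u" by linarith
  thus ?thesis unfolding data_norm_def by simp
qed

lemma bdd:
  fixes A :: "real^'m^'n" and u :: "real^'m"
  assumes "{A *v l | l. \<forall>i. l $ i \<ge> 0} = UNIV"
  shows "bdd_above (range (\<lambda>x::real^'n. Min (range (\<lambda>i. u $ i - (transpose A *v x) $ i))))"
proof -
  obtain k :: 'n where True by simp
  define v :: "real^'n" where "v = axis k 1"
  have vnz: "v \<noteq> 0" unfolding v_def by (simp add: axis_eq_0_iff)
  have "v \<in> {A *v l | l. \<forall>i. l $ i \<ge> 0}" using assms by simp
  then obtain l1 where l1: "A *v l1 = v" "\<forall>i. l1 $ i \<ge> 0" by blast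
  have "-v \<in> {A *v l | l. \<forall>i. l $ i \<ge> 0}" using assms by simp
  then obtain l2 where l2: "A *v l2 = -v" "\<forall>i. l2 $ i \<ge> 0"
    unfolding mem_Collect_eq by metis
  define l where "l = l1 + l2"
  have lnn: "\<forall>i. l $ i \<ge> 0" using l1 l2 by (simp add: l_def)
  have Al: "A *v l = 0" using l1 l2 by (simp add: l_def matrix_vector_right_distrib)
  have lnz: "l \<noteq> 0"
  proof
    assume "l = 0"
    hence "l1 = 0" using l1 l2 unfolding l_def
      by (metis (no_types, lifting) add_nonneg_eq_0_iff vec_eq_iff zero_index plus_vec_def vec_lambda_beta)
    thus False using l1 vnz by simp
  qed
  define L where "L = (\<Sum>i\<in>UNIV. l $ i)"
  have Lpos: "L > 0"
  proof -
    obtain j where "l $ j \<noteq> 0" using lnz by (metis vec_eq_iff zero_index)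
    hence "l $ j > 0" using lnn by (metis less_eq_real_def)
    moreover have "l $ j \<le> L" unfolding L_def
      by (rule member_le_sum) (use lnn in auto)
    ultimately show ?thesis by linarith
  qed
  show ?thesis unfolding bdd_above_def
  proof (intro exI ballI)
    fix t assume "t \<in> range (\<lambda>x::real^'n. Min (range (\<lambda>i. u $ i - (transpose A *v x) $ i)))"
    then obtain x where tx: "t = Min (range (\<lambda>i. u $ i - (transpose A *v x) $ i))" by auto
    have le: "\<And>i. t \<le> u $ i - (transpose A *v x) $ i" unfolding tx by (rule Min_le) auto
    have zero: "(\<Sum>i\<in>UNIV. l $ i * (transpose A *v x) $ i) = 0"
    proof -
      have "(\<Sum>i\<in>UNIV. l $ i * (transpose A *v x) $ i)
          = (\<Sum>i\<in>UNIV. \<Sum>j\<in>UNIV. l $ i * (A $ j $ i * x $ j))"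
        by (simp add: matrix_vector_mult_def transpose_def sum_distrib_left)
      also have "\<dots> = (\<Sum>j\<in>UNIV. x $ j * (\<Sum>i\<in>UNIV. A $ j $ i * l $ i))"
        by (subst sum.swap) (simp add: sum_distrib_left mult_ac)
      also have "\<dots> = (\<Sum>j\<in>UNIV. x $ j * (A *v l) $ j)"
        by (simp add: matrix_vector_mult_def)
      also have "\<dots> = 0" using Al by simp
      finally show ?thesis .
    qed
    have "(\<Sum>i\<in>UNIV. l $ i * t) \<le> (\<Sum>i\<in>UNIV. l $ i * (u $ i - (transpose A *v x) $ i))"
      by (rule sum_mono) (use lnn le in \<open>simp add: mult_left_mono\<close>)
    also have "\<dots> = (\<Sum>i\<in>UNIV. l $ i * u $ i)" using zero
      by (simp add: right_diff_distrib sum_subtractf)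
    finally have "t * L \<le> (\<Sum>i\<in>UNIV. l $ i * u $ i)"
      by (simp add: L_def sum_distrib_left mult.commute)
    thus "t \<le> (\<Sum>i\<in>UNIV. l $ i * u $ i) / L" using Lpos by (simp add: pos_le_divide_eq)
  qed
qed

theorem mainTheorem15:
  fixes A :: "real^'m^'n" and u :: "real^'m"
  assumes "\<forall>i. norm (column i A) = 1"
    and "{A *v l | l. \<forall>i. l $ i \<ge> 0} = UNIV"
  shows "tau A u \<ge> rho_bar A u"
proof -
  define f where "f = (\<lambda>x::real^'n. Min (range (\<lambda>i. u $ i - (transpose A *v x) $ i)))"
  have B: "bdd_above (range f)" unfolding f_def by (rule bdd[OF assms(2)])
  have zs: "z_star A u = Sup (range f)" unfolding z_star_def f_def by simp
  define z where "z = z_star A u"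
  have fle: "\<And>x. f x \<le> z" unfolding z_def zs by (rule cSup_upper[OF _ B]) auto
  have fmin: "\<And>x i. f x \<le> u $ i - (transpose A *v x) $ i" unfolding f_def by (rule Min_le) auto
  have fatt: "\<And>x. \<exists>i. f x = u $ i - (transpose A *v x) $ i"
  proof -
    fix x
    have "f x \<in> range (\<lambda>i. u $ i - (transpose A *v x) $ i)" unfolding f_def
      by (rule Min_in) auto
    thus "\<exists>i. f x = u $ i - (transpose A *v x) $ i" by auto
  qed
  have bb: "\<And>P. bdd_below {data_norm dA du |dA du. P dA du}"
    unfolding bdd_below_def using dn_nonneg by blast
  have main: "rho_bar A u \<le> \<bar>z\<bar> + e" if e: "e > 0" for e
  proof (cases "feasible A u")
    case True
    define d :: "real^'m" where "d = (\<chi> i. - (\<bar>z\<bar> + e))"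
    have inf: "\<not> feasible (A + 0) (u + d)"
    proof
      assume "feasible (A + 0) (u + d)"
      then obtain x where x: "\<forall>i. (transpose A *v x) $ i \<le> u $ i + d $ i"
        unfolding feasible_def by auto
      obtain i where i: "f x = u $ i - (transpose A *v x) $ i" using fatt by blast
      have "f x \<le> z" by (rule fle)
      thus False using x[rule_format, of i] i e unfolding d_def by simp
    qed
    have "data_norm (0::real^'m^'n) d \<in> {data_norm dA du |dA du. \<not> feasible (A + dA) (u + du)}"
      apply (rule CollectI) apply (rule exI[of _ 0]) apply (rule exI[of _ d]) using inf by simp
    hence "Inf {data_norm dA du |dA du. \<not> feasible (A + dA) (u + du)} \<le> data_norm (0::real^'m^'n) d"
      by (rule cInf_lower[OF _ bb])
    thus ?thesis using True e unfolding rho_bar_def d_def dn_const by simp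
  next
    case False
    define d :: "real^'m" where "d = (\<chi> i. \<bar>z\<bar> + e)"
    have "z - e < Sup (range f)" using e zs z_def by simp
    then obtain x where x: "z - e < f x" using less_cSup_iff[of "range f"] B by auto
    have fe: "feasible (A + 0) (u + d)" unfolding feasible_def
    proof (intro exI allI)
      fix i
      have "f x \<le> u $ i - (transpose A *v x) $ i" by (rule fmin)
      thus "(transpose (A + 0) *v x) $ i \<le> (u + d) $ i" using x unfolding d_def by simp
    qed
    have "data_norm (0::real^'m^'n) d \<in> {data_norm dA du |dA du. feasible (A + dA) (u + du)}"
      apply (rule CollectI) apply (rule exI[of _ 0]) apply (rule exI[of _ d]) using fe by simp
    hence "Inf {data_norm dA du |dA du. feasible (A + dA) (u + du)} \<le> data_norm (0::real^'m^'n) d"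
      by (rule cInf_lower[OF _ bb])
    thus ?thesis using False e unfolding rho_bar_def d_def dn_const by simp
  qed
  have "rho_bar A u \<le> \<bar>z\<bar>" by (rule field_le_epsilon) (use main in auto)
  thus ?thesis unfolding tau_def z_def .
qed

end
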